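(* Let $k\ge16/(3\sqrt3)$ be real. For $x=e^{i\theta}$ on the unit circle (with $\cos\theta\ne0$) set $$y_{2}(x)=\frac{k-\sqrt{k^2-16\cos^2\theta\,(3-4\cos^2\theta)}}{4\cos\theta}.$$ Then $|y_2(x)|\le1$ for all such $x$.
   Context: $y_2(x)$ is the root of smaller absolute value in $y$ of $(x+x^{-1})y^2-ky-(x^3+x^{-3})=0$ (which equals $-y^3R_k(x/y,1/(xy))$ for $R_k(x,y)=y^3-y+x^3-x+kxy$). Here $\sqrt{\cdot}$ is the principal square root. *)

theory Defs
  imports "HOL-Analysis.Analysis"
begin

text \<open>y_2(x) for x = e^{i theta}, written via theta; principal complex square root.\<close>
definition y2 :: "real \<Rightarrow> real \<Rightarrow> complex" where
  "y2 k \<theta> = (complex_of_real k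
      - csqrt (complex_of_real (k^2 - 16 * (cos \<theta>)^2 * (3 - 4 * (cos \<theta>)^2))))
      / complex_of_real (4 * cos \<theta>)"

end

theory Submission
  imports Defs
begin

lemma key:
  fixes t :: real assumes "t \<ge> 0"
  shows "8 * t * (1 - t^2) \<le> 16 / (3 * sqrt 3)"
proof -
  define r where "r = sqrt 3"
  have r2: "r^2 = 3" and rp: "r > 0" by (auto simp: r_def)
  have id: "24*r*t^3 - 24*r*t + 16 = 24*r*(t - 1/r)^2*(t + 2/r)"
    using rp r2 by (simp add: field_simps power2_eq_square power3_eq_cube)
  have "0 \<le> 24*r*(t - 1/r)^2*(t + 2/r)" using rp assms by simp
  hence "8 * t * (1 - t^2) * (3*r) \<le> 16" using id by (simp add: algebra_simps power2_eq_square power3_eq_cube)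
  thus ?thesis using rp by (simp add: r_def field_simps)
qed

theorem lemma3:
  fixes k \<theta> :: real
  assumes "k \<ge> 16 / (3 * sqrt 3)"
    and "cos \<theta> \<noteq> 0"
  shows "cmod (y2 k \<theta>) \<le> 1"
proof -
  define c where "c = cos \<theta>"
  define D where "D = k^2 - 16 * c^2 * (3 - 4 * c^2)"
  define t where "t = \<bar>c\<bar>"
  have t0: "t > 0" "t \<le> 1" using assms(2) by (auto simp: t_def c_def)
  have c2: "c^2 = t^2" by (simp add: t_def)
  have kt: "8*t*(1-t^2) \<le> k" using key[of t] t0 assms(1) by linarith
  have kpos: "k > 0" using assms(1) proof - have "0 < 16/(3 * sqrt 3)" by simp thus ?thesis using assms(1) by linarith qed
  have "9 - 16 * c^2 * (3 - 4 * c^2) = (8*c^2-3)^2" by (simp add: power2_eq_square algebra_simps)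
  hence "16 * c^2 * (3 - 4 * c^2) \<le> 9" by (smt (verit) zero_le_power2)
  have k3: "k * k \<ge> (16/(3 * sqrt 3))^2" using assms(1)
  proof -
    have "0 \<le> 16/(3 * sqrt 3)" by simp
    thus ?thesis using mult_mono[OF assms(1) assms(1)] kpos unfolding power2_eq_square by linarith
  qed
  have "(16/(3 * sqrt 3))^2 = 256/27" by (simp add: power_divide power_mult_distrib)
  hence Dpos: "D \<ge> 0" unfolding D_def
    using k3 \<open>16 * c^2 * (3 - 4 * c^2) \<le> 9\<close> unfolding power2_eq_square[of k] by linarith
  define s where "s = sqrt D"
  have s0: "s \<ge> 0" and s2: "s^2 = D" using Dpos by (auto simp: s_def)
  have y: "y2 k \<theta> = complex_of_real ((k - s) / (4*c))"
  proof -
    have "csqrt (complex_of_real D) = complex_of_real s"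
      unfolding s_def by (rule csqrt_of_real[OF Dpos])
    hence "y2 k \<theta> = (complex_of_real k - complex_of_real s) / complex_of_real (4*c)"
      unfolding y2_def D_def c_def by simp
    thus ?thesis by simp
  qed
  have "\<bar>k - s\<bar> \<le> 4*t"
  proof (cases "k \<ge> s")
    case True
    show ?thesis
    proof (cases "k \<le> 4*t")
      case True thus ?thesis using \<open>k \<ge> s\<close> s0 by simp
    next
      case False
      have e: "s^2 - (k - 4*t)^2 = 8*t*(k - 8*t*(1-t^2))"
        using s2 unfolding D_def c2 by (simp add: power2_eq_square algebra_simps)
      have "0 \<le> 8*t*(k - 8*t*(1-t^2))" using kt t0 by simp
      hence "(k - 4*t)^2 \<le> s^2" using e by linarith
      hence "k - 4*t \<le> s" using s0 False
        using power2_le_imp_le by simp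
      thus ?thesis using True by simp
    qed
  next
    case False
    have e: "(k + 4*t)^2 - s^2 = 8*k*t + 64*t^2*(1-t^2)"
      using s2 unfolding D_def c2 by (simp add: power2_eq_square algebra_simps)
    have "t^2 \<le> 1" using t0 by (simp add: power_le_one)
    hence "0 \<le> 8*k*t + 64*t^2*(1-t^2)" using kpos t0 by simp
    hence "s^2 \<le> (k + 4*t)^2" using e by linarith
    hence "s \<le> k + 4*t" using kpos t0 using power2_le_imp_le[of s "k+4*t"] by simp
    thus ?thesis using False by simp
  qed
  moreover have "\<bar>4*c\<bar> = 4*t" by (simp add: t_def)
  ultimately have "\<bar>(k - s) / (4*c)\<bar> \<le> 1" using t0 by (simp add: abs_divide)
  moreover have "cmod (complex_of_real ((k - s) / (4*c))) = \<bar>(k - s) / (4*c)\<bar>"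
    by (rule norm_of_real)
  ultimately show ?thesis using y by metis
qed

end
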